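(* Let $S=(P,L)$ be a $(2,2)$-generalized quadrangle and let $(R,\psi)$ be a faithful representation of $S$ with $\psi(x)=\langle r_x\rangle$ and $|R|=2^4$. Let $a,b,c$ be three distinct points of $S$ with $r_ar_br_c=1$. Then $\{a,b,c\}$ is either a line or a complete $3$-arc of $S$.
   Context: A $(2,t)$-generalized quadrangle is a partial linear space in which every line has exactly $3$ points, every point lies on exactly $t+1$ lines, no point is collinear with all points, and for every point $x$ and line $\ell$ with $x\notin\ell$, $x$ is collinear with exactly one point of $\ell$. A $k$-arc is a set of $k$ pairwise non-collinear points; it is complete if it is not contained in a $(k+1)$-arc. A representation $(R,\psi)$ of $S$ is a group $R$ with a map $\psi$ assigning to each point $x$ a subgroup $\psi(x)=\langle r_x\rangle$ of order $2$, such that $R$ is generated by the $r_x$ and, for every line $\{x,y,z\}$, $\{1,r_x,r_y,r_z\}$ is a Klein four subgroup. It is faithful if $\psi$ is injective. *)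

theory Defs
  imports "HOL-Algebra.Algebra"
begin

definition collinear :: "'p set set \<Rightarrow> 'p \<Rightarrow> 'p \<Rightarrow> bool" where
  "collinear L x y \<longleftrightarrow> (\<exists>l\<in>L. x \<in> l \<and> y \<in> l)"

definition partial_linear_space :: "'p set \<Rightarrow> 'p set set \<Rightarrow> bool" where
  "partial_linear_space P L \<longleftrightarrow>
     (\<forall>l\<in>L. l \<subseteq> P \<and> finite l \<and> card l \<ge> 2) \<and>
     (\<forall>x\<in>P. \<forall>y\<in>P. x \<noteq> y \<longrightarrow> card {l\<in>L. x \<in> l \<and> y \<in> l} \<le> 1 \<and> finite {l\<in>L. x \<in> l \<and> y \<in> l})"

definition gen_quadrangle_2t :: "nat \<Rightarrow> 'p set \<Rightarrow> 'p set set \<Rightarrow> bool" where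
  "gen_quadrangle_2t t P L \<longleftrightarrow>
     partial_linear_space P L \<and>
     (\<forall>l\<in>L. card l = 3) \<and>
     (\<forall>x\<in>P. finite {l\<in>L. x \<in> l} \<and> card {l\<in>L. x \<in> l} = t + 1) \<and>
     (\<forall>x\<in>P. \<exists>y\<in>P. \<not> collinear L x y) \<and>
     (\<forall>x\<in>P. \<forall>l\<in>L. x \<notin> l \<longrightarrow> (\<exists>!y. y \<in> l \<and> collinear L x y))"

definition is_arc :: "'p set \<Rightarrow> 'p set set \<Rightarrow> nat \<Rightarrow> 'p set \<Rightarrow> bool" where
  "is_arc P L k A \<longleftrightarrow> A \<subseteq> P \<and> finite A \<and> card A = k \<and>
     (\<forall>x\<in>A. \<forall>y\<in>A. x \<noteq> y \<longrightarrow> \<not> collinear L x y)"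

definition is_complete_arc :: "'p set \<Rightarrow> 'p set set \<Rightarrow> nat \<Rightarrow> 'p set \<Rightarrow> bool" where
  "is_complete_arc P L k A \<longleftrightarrow> is_arc P L k A \<and>
     \<not> (\<exists>B. is_arc P L (k + 1) B \<and> A \<subseteq> B)"

definition klein_four_subgroup :: "('g, 'b) monoid_scheme \<Rightarrow> 'g set \<Rightarrow> bool" where
  "klein_four_subgroup R K \<longleftrightarrow> subgroup K R \<and> finite K \<and> card K = 4 \<and>
     (\<forall>k\<in>K. k \<otimes>\<^bsub>R\<^esub> k = \<one>\<^bsub>R\<^esub>)"

definition rep_psi :: "('g, 'b) monoid_scheme \<Rightarrow> ('p \<Rightarrow> 'g) \<Rightarrow> 'p \<Rightarrow> 'g set" where
  "rep_psi R r x = generate R {r x}"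

definition representation ::
    "'p set \<Rightarrow> 'p set set \<Rightarrow> ('g, 'b) monoid_scheme \<Rightarrow> ('p \<Rightarrow> 'g) \<Rightarrow> bool" where
  "representation P L R r \<longleftrightarrow> group R \<and>
     (\<forall>x\<in>P. r x \<in> carrier R \<and> finite (rep_psi R r x) \<and> card (rep_psi R r x) = 2) \<and>
     generate R (r ` P) = carrier R \<and>
     (\<forall>x y z. {x, y, z} \<in> L \<longrightarrow> x \<noteq> y \<longrightarrow> y \<noteq> z \<longrightarrow> x \<noteq> z \<longrightarrow>
        klein_four_subgroup R {\<one>\<^bsub>R\<^esub>, r x, r y, r z})"

definition faithful_representation ::
    "'p set \<Rightarrow> 'p set set \<Rightarrow> ('g, 'b) monoid_scheme \<Rightarrow> ('p \<Rightarrow> 'g) \<Rightarrow> bool" where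
  "faithful_representation P L R r \<longleftrightarrow> representation P L R r \<and> inj_on (rep_psi R r) P"

end

theory Submission
  imports Defs
begin

lemma (in group) inv_prod_eq:
  assumes "x \<in> carrier G" "y \<in> carrier G" "z \<in> carrier G" "z \<otimes> z = \<one>" "x \<otimes> y \<otimes> z = \<one>"
  shows "x \<otimes> y = z"
proof -
  have "x \<otimes> y = x \<otimes> y \<otimes> (z \<otimes> z)" using assms(1,2,4) by simp
  also have "\<dots> = (x \<otimes> y \<otimes> z) \<otimes> z" using assms(1-3) by (simp add: m_assoc)
  also have "\<dots> = z" using assms(3,5) by (metis l_one)
  finally show ?thesis .
qed

lemma (in group) self_inv:
  assumes "x \<in> carrier G" "x \<otimes> x = \<one>" shows "inv x = x"
  using assms inv_equality by blast

lemma (in group) inv_comm: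
  assumes "x \<in> carrier G" "y \<in> carrier G" "x \<otimes> x = \<one>" "y \<otimes> y = \<one>" "(x \<otimes> y) \<otimes> (x \<otimes> y) = \<one>"
  shows "y \<otimes> x = x \<otimes> y"
proof -
  have "inv (x \<otimes> y) = x \<otimes> y" using assms self_inv[of "x \<otimes> y"] by blast
  moreover have "inv (x \<otimes> y) = y \<otimes> x" using assms inv_mult_group[of x y] self_inv[of x] self_inv[of y] by simp
  ultimately show ?thesis by simp
qed

lemma (in group) klein_prod:
  assumes "klein_four_subgroup G {\<one>, x, y, z}" "x \<noteq> y"
  shows "x \<otimes> y = z"
proof -
  let ?K = "{\<one>, x, y, z}"
  have sg: "subgroup ?K G" and c4: "card ?K = 4" and sq: "\<forall>k\<in>?K. k \<otimes> k = \<one>"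
    using assms unfolding klein_four_subgroup_def by auto
  have d: "\<one> \<noteq> x" "\<one> \<noteq> y" "\<one> \<noteq> z" "x \<noteq> z" "y \<noteq> z"
    using c4 by (auto simp: card_insert_if split: if_splits)
  have car: "x \<in> carrier G" "y \<in> carrier G" "z \<in> carrier G"
    using subgroup.subset[OF sg] by auto
  have "x \<otimes> y \<in> ?K" using subgroup.m_closed[OF sg] by auto
  moreover have "x \<otimes> y \<noteq> \<one>"
  proof
    assume "x \<otimes> y = \<one>"
    then have "x \<otimes> y = x \<otimes> x" using sq by simp
    then show False using car assms(2) by simp
  qed
  moreover have "x \<otimes> y \<noteq> x"
    using car(1,2) d(2) by (metis l_cancel_one')
  moreover have "x \<otimes> y \<noteq> y"
    using car(1,2) d(1) by (metis r_cancel_one')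
  ultimately show ?thesis using assms(2) by auto
qed


lemma (in group) klein_elems:
  assumes "klein_four_subgroup G {\<one>, x, y, z}"
  shows "x \<in> carrier G \<and> x \<noteq> \<one> \<and> x \<otimes> x = \<one>"
proof -
  let ?K = "{\<one>, x, y, z}"
  have sg: "subgroup ?K G" and c4: "card ?K = 4" and sq: "\<forall>k\<in>?K. k \<otimes> k = \<one>"
    using assms unfolding klein_four_subgroup_def by auto
  have d: "\<one> \<noteq> x"
    using c4 by (auto simp: card_insert_if split: if_splits)
  show ?thesis using subgroup.subset[OF sg] d sq by auto
qed

locale gqrep = group G for G (structure) +
  fixes P :: "'p set" and L :: "'p set set" and r
  assumes gq: "gen_quadrangle_2t 2 P L"
    and frep: "faithful_representation P L G r"
begin

lemma lineP: "l \<in> L \<Longrightarrow> l \<subseteq> P"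
  using gq unfolding gen_quadrangle_2t_def partial_linear_space_def by blast

lemma line_card: "l \<in> L \<Longrightarrow> card l = 3"
  using gq unfolding gen_quadrangle_2t_def by blast

lemma lines_through: "x \<in> P \<Longrightarrow> card {l\<in>L. x \<in> l} = 3"
  using gq unfolding gen_quadrangle_2t_def by auto

lemma gqax: "p \<in> P \<Longrightarrow> l \<in> L \<Longrightarrow> p \<notin> l \<Longrightarrow> \<exists>!y. y \<in> l \<and> collinear L p y"
  using gq unfolding gen_quadrangle_2t_def by blast

lemma coll_sym: "collinear L x y \<Longrightarrow> collinear L y x"
  unfolding collinear_def by blast

lemma coll_line: "l \<in> L \<Longrightarrow> x \<in> l \<Longrightarrow> y \<in> l \<Longrightarrow> collinear L x y"
  unfolding collinear_def by blast

lemma uniq_line: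
  assumes "l1 \<in> L" "l2 \<in> L" "x \<noteq> y" "x \<in> l1" "y \<in> l1" "x \<in> l2" "y \<in> l2"
  shows "l1 = l2"
proof -
  have xy: "x \<in> P" "y \<in> P" using assms lineP by auto
  have "card {l\<in>L. x \<in> l \<and> y \<in> l} \<le> 1" "finite {l\<in>L. x \<in> l \<and> y \<in> l}"
    using gq xy assms(3) unfolding gen_quadrangle_2t_def partial_linear_space_def by auto
  then show ?thesis using assms by (auto simp: card_le_Suc0_iff_eq)
qed

lemma klein: "{x, y, z} \<in> L \<Longrightarrow> x \<noteq> y \<Longrightarrow> y \<noteq> z \<Longrightarrow> x \<noteq> z \<Longrightarrow>
    klein_four_subgroup G {\<one>, r x, r y, r z}"
  using frep unfolding faithful_representation_def representation_def by blast

lemma rx: assumes "x \<in> P" shows "r x \<in> carrier G \<and> r x \<noteq> \<one> \<and> r x \<otimes> r x = \<one>"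
proof -
  have "{l\<in>L. x \<in> l} \<noteq> {}" using lines_through[OF assms] by (metis card.empty zero_neq_numeral)
  then obtain l where l: "l \<in> L" "x \<in> l" by auto
  then obtain p q s where pqs: "l = {p, q, s}" "p \<noteq> q" "q \<noteq> s" "p \<noteq> s"
    using line_card card_3_iff by metis
  have k: "klein_four_subgroup G {\<one>, r p, r q, r s}" using klein pqs l by blast
  have "x = p \<or> x = q \<or> x = s" using pqs l by auto
  moreover have "klein_four_subgroup G {\<one>, r q, r p, r s}" "klein_four_subgroup G {\<one>, r s, r q, r p}"
    using k by (simp_all add: insert_commute)
  ultimately show ?thesis using k klein_elems by blast
qed

lemma r_inj: "x \<in> P \<Longrightarrow> y \<in> P \<Longrightarrow> r x = r y \<Longrightarrow> x = y"
  using frep unfolding faithful_representation_def inj_on_def rep_psi_def by metis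

lemma line3: assumes "{x, y, z} \<in> L" "x \<noteq> y" "y \<noteq> z" "x \<noteq> z"
  shows "r x \<otimes> r y = r z"
proof -
  have "x \<in> P" "y \<in> P" using lineP assms(1) by auto
  then have "r x \<noteq> r y" using r_inj assms(2) by blast
  then show ?thesis using klein_prod[OF klein[OF assms]] by blast
qed

lemma third:
  assumes "x \<in> P" "y \<in> P" "x \<noteq> y" "collinear L x y"
  shows "\<exists>z. {x, y, z} \<in> L \<and> z \<noteq> x \<and> z \<noteq> y"
proof -
  obtain l where l: "l \<in> L" "x \<in> l" "y \<in> l" using assms(4) unfolding collinear_def by blast
  have "card (l - {x, y}) = 1" using l line_card[OF l(1)] assms(3)
    by (simp add: card_Diff_subset)
  then obtain z where z: "l - {x, y} = {z}" by (meson card_1_singletonE)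
  then have "l = {x, y, z}" using l by auto
  then show ?thesis using z l by auto
qed

lemma prodline:
  assumes "x \<in> P" "y \<in> P" "z \<in> P" "r x \<otimes> r y = r z" "x \<noteq> y" "collinear L x y"
  shows "{x, y, z} \<in> L"
proof -
  obtain w where w: "{x, y, w} \<in> L" "w \<noteq> x" "w \<noteq> y" using third assms by blast
  have "w \<in> P" using lineP w(1) by auto
  moreover have "r w = r z" using line3[OF w(1) assms(5)] w assms(4) by auto
  ultimately show ?thesis using r_inj assms w by blast
qed

lemma line3': assumes "{x, y, z} \<in> L" "x \<noteq> y" "y \<noteq> z" "x \<noteq> z"
  shows "r y \<otimes> r x = r z"
  using line3[of y x z] assms by (simp add: insert_commute)

lemma prod_comm:
  assumes "a \<in> P" "b \<in> P" "c \<in> P" "r a \<otimes> r b = r c"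
  shows "r b \<otimes> r a = r a \<otimes> r b"
  using inv_comm[of "r a" "r b"] rx assms by simp

lemma key:
  assumes P: "x \<in> P" "a \<in> P" "b \<in> P" "c \<in> P"
    and rab: "r a \<otimes> r b = r c" and ab: "a \<noteq> b" and nab: "\<not> collinear L a b"
    and xa: "collinear L x a" and xb: "collinear L x b" and "x \<noteq> a" "x \<noteq> b"
  shows "collinear L x c"
proof (rule ccontr)
  assume nxc: "\<not> collinear L x c"
  have ra: "r a \<in> carrier G" "r a \<noteq> \<one>" "r a \<otimes> r a = \<one>" using rx P by auto
  have rb: "r b \<in> carrier G" "r b \<noteq> \<one>" "r b \<otimes> r b = \<one>" using rx P by auto
  have rxx: "r x \<in> carrier G" "r x \<noteq> \<one>" "r x \<otimes> r x = \<one>" using rx P by auto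
  have cm: "r b \<otimes> r a = r a \<otimes> r b" using prod_comm P rab by blast
  obtain p where lp: "{x, a, p} \<in> L" "p \<noteq> x" "p \<noteq> a" using third P xa \<open>x \<noteq> a\<close> by blast
  obtain q where lq: "{x, b, q} \<in> L" "q \<noteq> x" "q \<noteq> b" using third P xb \<open>x \<noteq> b\<close> by blast
  have pP: "p \<in> P" and qP: "q \<in> P" using lineP lp lq by auto
  have rp: "r x \<otimes> r a = r p" "r a \<otimes> r x = r p" using line3 line3' lp \<open>x \<noteq> a\<close> by auto
  have rq: "r x \<otimes> r b = r q" "r b \<otimes> r x = r q" using line3 line3' lq \<open>x \<noteq> b\<close> by auto
  have rac: "r a \<otimes> r c = r b" using rab ra rb by (metis l_one m_assoc)
  have nac: "\<not> collinear L a c"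
  proof
    assume "collinear L a c"
    moreover have "a \<noteq> c"
    proof
      assume "a = c"
      with rab have "r a \<otimes> r b = r a" by simp
      with ra rb show False by simp
    qed
    ultimately have "{a, c, b} \<in> L" using prodline P rac by blast
    then show False using nab coll_line by blast
  qed
  have cx: "c \<noteq> x" using nac xa coll_sym by blast
  have ca: "c \<noteq> a"
  proof
    assume "c = a"
    with rab have "r a \<otimes> r b = r a" by simp
    with ra rb show False by simp
  qed
  have cp: "c \<noteq> p"
  proof
    assume "c = p"
    then have "r a \<otimes> r b = r a \<otimes> r x" using rab rp by simp
    then have "r b = r x" using ra rb rxx by simp
    then show False using r_inj P \<open>x \<noteq> b\<close> by metis
  qed
  have "c \<notin> {x, a, p}" using cx ca cp by auto
  then obtain y where y: "y \<in> {x, a, p}" "collinear L c y" using gqax[OF P(4) lp(1)] by blast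
  have "y = p" using y nxc nac coll_sym by auto
  then have cpc: "collinear L c p" using y by simp
  obtain e where le: "{c, p, e} \<in> L" "e \<noteq> c" "e \<noteq> p" using third P pP cpc cp by blast
  have eP: "e \<in> P" using le lineP by auto
  have "r e = r c \<otimes> r p" using line3 le cp by auto
  also have "\<dots> = (r a \<otimes> r b) \<otimes> (r a \<otimes> r x)" using rab rp by simp
  also have "\<dots> = r a \<otimes> (r b \<otimes> r a) \<otimes> r x" using ra rb rxx by (simp add: m_assoc)
  also have "\<dots> = r a \<otimes> (r a \<otimes> r b) \<otimes> r x" by (simp only: cm)
  also have "\<dots> = (r a \<otimes> r a) \<otimes> (r b \<otimes> r x)" using ra(1) rb(1) rxx(1) by (simp only: m_assoc m_closed)
  also have "\<dots> = r q" using ra rb rxx rq rx[OF qP] by simp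
  finally have "e = q" using r_inj eP qP by blast
  then have pq: "collinear L p q" using le coll_line by blast
  have px: "collinear L p x" using lp coll_line by blast
  have "p \<noteq> b" using lp nab coll_line by blast
  moreover have "p \<noteq> q"
  proof
    assume "p = q"
    then have "r x \<otimes> r a = r x \<otimes> r b" using rp rq by simp
    then have "r a = r b" using ra rb rxx by simp
    then show False using r_inj P ab by metis
  qed
  ultimately have "p \<notin> {x, b, q}" using lp by auto
  then have "\<exists>!y. y \<in> {x, b, q} \<and> collinear L p y" using gqax pP lq by blast
  then show False using pq px lq by blast
qed

lemma perp_bound:
  assumes y: "y1 \<in> P" "y2 \<in> P" "\<not> collinear L y1 y2"
    and S: "\<forall>z\<in>S. collinear L z y1 \<and> collinear L z y2 \<and> z \<noteq> y1"
  shows "finite S \<and> card S \<le> 3"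
proof -
  define m where "m z = (SOME l. l \<in> L \<and> y1 \<in> l \<and> z \<in> l)" for z
  have m: "m z \<in> L \<and> y1 \<in> m z \<and> z \<in> m z" if "z \<in> S" for z
  proof -
    have "\<exists>l. l \<in> L \<and> y1 \<in> l \<and> z \<in> l" using S that unfolding collinear_def by blast
    then show ?thesis unfolding m_def by (rule someI_ex)
  qed
  have y2m: "y2 \<notin> m z" if "z \<in> S" for z
    using m[OF that] y(3) coll_line by blast
  have inj: "inj_on m S"
  proof (rule inj_onI)
    fix z w assume zw: "z \<in> S" "w \<in> S" "m z = m w"
    have "\<exists>!u. u \<in> m z \<and> collinear L y2 u" using gqax[OF y(2)] m[OF zw(1)] y2m[OF zw(1)] by blast
    moreover have "z \<in> m z \<and> collinear L y2 z" "w \<in> m z \<and> collinear L y2 w"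
      using m zw S coll_sym by auto
    ultimately show "z = w" by blast
  qed
  have sub: "m ` S \<subseteq> {l\<in>L. y1 \<in> l}" using m by auto
  have fin: "finite {l\<in>L. y1 \<in> l}" using lines_through[OF y(1)] by (metis card.infinite zero_neq_numeral)
  have "finite (m ` S)" using sub fin finite_subset by blast
  then have fS: "finite S" using inj finite_imageD by blast
  have "card S = card (m ` S)" using inj card_image by metis
  also have "\<dots> \<le> 3" using card_mono[OF fin sub] lines_through[OF y(1)] by simp
  finally show ?thesis using fS by simp
qed

lemma caseB:
  assumes P: "a \<in> P" "b \<in> P" "c \<in> P" "y \<in> P" "d \<in> P"
    and rab: "r a \<otimes> r b = r c" and ab: "a \<noteq> b"
    and nab: "\<not> collinear L a b" and nac: "\<not> collinear L a c"
    and ya: "collinear L y a" and yb: "collinear L y b" and yc: "collinear L y c"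
    and "y \<noteq> a" "y \<noteq> b"
    and nda: "\<not> collinear L d a" and ndb: "\<not> collinear L d b" and ndc: "\<not> collinear L d c"
    and ndy: "\<not> collinear L d y"
  shows False
proof -
  have ra: "r a \<in> carrier G" "r a \<noteq> \<one>" "r a \<otimes> r a = \<one>" using rx P by auto
  have rb: "r b \<in> carrier G" "r b \<noteq> \<one>" "r b \<otimes> r b = \<one>" using rx P by auto
  have ry: "r y \<in> carrier G" "r y \<noteq> \<one>" "r y \<otimes> r y = \<one>" using rx P by auto
  obtain p where lp: "{y, a, p} \<in> L" "p \<noteq> y" "p \<noteq> a" using third P ya \<open>y \<noteq> a\<close> by blast
  obtain q where lq: "{y, b, q} \<in> L" "q \<noteq> y" "q \<noteq> b" using third P yb \<open>y \<noteq> b\<close> by blast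
  have pP: "p \<in> P" and qP: "q \<in> P" using lineP lp lq by auto
  have rp: "r y \<otimes> r a = r p" "r a \<otimes> r y = r p" using line3 line3' lp \<open>y \<noteq> a\<close> by auto
  have rq: "r y \<otimes> r b = r q" "r b \<otimes> r y = r q" using line3 line3' lq \<open>y \<noteq> b\<close> by auto
  have dy: "d \<noteq> y" using nda ya by blast
  have da: "d \<noteq> a" using ndy ya coll_sym by blast
  have dp: "d \<noteq> p" using ndy lp coll_line by blast
  have db: "d \<noteq> b" using ndy yb coll_sym by blast
  have dq: "d \<noteq> q" using ndy lq coll_line by blast
  obtain z where z: "z \<in> {y, a, p}" "collinear L d z"
    using gqax[OF P(5) lp(1)] dy da dp by blast
  have dpc: "collinear L d p" using z ndy nda by auto
  obtain z' where z': "z' \<in> {y, b, q}" "collinear L d z'"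
    using gqax[OF P(5) lq(1)] dy db dq by blast
  have dqc: "collinear L d q" using z' ndy ndb by auto
  have "r p \<otimes> r q = (r a \<otimes> r y) \<otimes> (r y \<otimes> r b)" using rp rq by simp
  also have "\<dots> = r a \<otimes> (r y \<otimes> r y) \<otimes> r b" using ra(1) rb(1) ry(1) by (simp only: m_assoc m_closed)
  also have "\<dots> = r c" using ra rb ry rab by simp
  finally have rpq: "r p \<otimes> r q = r c" .
  have pq: "p \<noteq> q"
  proof
    assume "p = q"
    then have "r y \<otimes> r a = r y \<otimes> r b" using rp rq by simp
    then have "r a = r b" using ra rb ry by simp
    then show False using r_inj P ab by metis
  qed
  have npq: "\<not> collinear L p q"
  proof
    assume "collinear L p q"
    then have "{p, q, c} \<in> L" using prodline pP qP P rpq pq by blast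
    then have cp: "collinear L c p" using coll_line by blast
    have cy: "c \<noteq> y" using nac ya coll_sym by blast
    have ca: "c \<noteq> a"
    proof
      assume "c = a"
      with rab have "r a \<otimes> r b = r a" by simp
      with ra rb show False by simp
    qed
    have cpn: "c \<noteq> p"
    proof
      assume "c = p"
      then have "r a \<otimes> r b = r a \<otimes> r y" using rab rp by simp
      then have "r b = r y" using ra rb ry by simp
      then show False using r_inj P \<open>y \<noteq> b\<close> by metis
    qed
    have "\<exists>!u. u \<in> {y, a, p} \<and> collinear L c u" using gqax[OF P(3) lp(1)] cy ca cpn by blast
    moreover have "y \<in> {y, a, p} \<and> collinear L c y" using yc coll_sym by blast
    moreover have "p \<in> {y, a, p} \<and> collinear L c p" using cp by blast
    ultimately show False using lp(2) by blast
  qed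
  have "collinear L d c" using key[OF P(5) pP qP P(3) rpq pq npq dpc dqc dp dq] .
  then show False using ndc by blast
qed

lemma main:
  assumes P: "a \<in> P" "b \<in> P" "c \<in> P" and d3: "a \<noteq> b" "b \<noteq> c" "a \<noteq> c"
    and rabc: "r a \<otimes> r b \<otimes> r c = \<one>"
  shows "{a, b, c} \<in> L \<or> is_complete_arc P L 3 {a, b, c}"
proof (cases "{a, b, c} \<in> L")
  case True then show ?thesis by simp
next
  case nL: False
  have ra: "r a \<in> carrier G" "r a \<noteq> \<one>" "r a \<otimes> r a = \<one>" using rx P by auto
  have rb: "r b \<in> carrier G" "r b \<noteq> \<one>" "r b \<otimes> r b = \<one>" using rx P by auto
  have rc: "r c \<in> carrier G" "r c \<noteq> \<one>" "r c \<otimes> r c = \<one>" using rx P by auto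
  have rab: "r a \<otimes> r b = r c" using inv_prod_eq ra rb rc rabc by blast
  have cm: "r b \<otimes> r a = r a \<otimes> r b" using prod_comm P rab by blast
  have rac: "r a \<otimes> r c = r b" using rab ra rb by (metis l_one m_assoc)
  have rbc: "r b \<otimes> r c = r a"
  proof -
    have "r b \<otimes> r c = r b \<otimes> (r b \<otimes> r a)" using rab cm by simp
    also have "\<dots> = r a" using ra rb by (simp flip: m_assoc)
    finally show ?thesis .
  qed
  have nab: "\<not> collinear L a b" using prodline P rab d3 nL by blast
  have nac: "\<not> collinear L a c"
  proof
    assume "collinear L a c"
    then have "{a, c, b} \<in> L" using prodline P rac d3 by blast
    then show False using nL by (simp add: insert_commute)
  qed
  have nbc: "\<not> collinear L b c"
  proof
    assume "collinear L b c"
    then have "{b, c, a} \<in> L" using prodline P rbc d3 by blast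
    then show False using nL by (simp add: insert_commute)
  qed
  have arc: "is_arc P L 3 {a, b, c}"
    unfolding is_arc_def using P d3 nab nac nbc coll_sym by auto
  have noext: "\<not> (\<exists>B. is_arc P L (3 + 1) B \<and> {a, b, c} \<subseteq> B)"
  proof
    assume "\<exists>B. is_arc P L (3 + 1) B \<and> {a, b, c} \<subseteq> B"
    then obtain B where B: "is_arc P L 4 B" "{a, b, c} \<subseteq> B" by auto
    have "\<not> B \<subseteq> {a, b, c}"
    proof
      assume "B \<subseteq> {a, b, c}"
      then have "B = {a, b, c}" using B by auto
      then show False using B d3 unfolding is_arc_def by simp
    qed
    then obtain d where d: "d \<in> B" "d \<notin> {a, b, c}" by auto
    have dP: "d \<in> P" using B d unfolding is_arc_def by auto
    have nda: "\<not> collinear L d a" and ndb: "\<not> collinear L d b" and ndc: "\<not> collinear L d c"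
      using B d unfolding is_arc_def by auto
    obtain l1 l2 l3 where ls: "{l\<in>L. a \<in> l} = {l1, l2, l3}" "l1 \<noteq> l2" "l2 \<noteq> l3" "l1 \<noteq> l3"
      using lines_through[OF P(1)] card_3_iff by metis
    have l1: "l1 \<in> L" "a \<in> l1" and l2: "l2 \<in> L" "a \<in> l2" using ls(1) by blast+
    have bl1: "b \<notin> l1" using nab coll_line l1 by blast
    have bl2: "b \<notin> l2" using nab coll_line l2 by blast
    obtain y1 where y1: "y1 \<in> l1" "collinear L b y1" using gqax[OF P(2) l1(1) bl1] by blast
    obtain y2 where y2: "y2 \<in> l2" "collinear L b y2" using gqax[OF P(2) l2(1) bl2] by blast
    have y1P: "y1 \<in> P" and y2P: "y2 \<in> P" using y1 y2 l1 l2 lineP by auto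
    have y1a: "collinear L y1 a" and y2a: "collinear L y2 a" using coll_line l1 l2 y1 y2 by blast+
    have y1b: "collinear L y1 b" and y2b: "collinear L y2 b" using y1 y2 coll_sym by blast+
    have y1na: "y1 \<noteq> a" and y2na: "y2 \<noteq> a" using y1 y2 nab coll_sym by auto
    have y1nb: "y1 \<noteq> b" and y2nb: "y2 \<noteq> b" using y1 y2 bl1 bl2 by auto
    have y1c: "collinear L y1 c" using key[OF y1P P rab d3(1) nab y1a y1b y1na y1nb] .
    have y2c: "collinear L y2 c" using key[OF y2P P rab d3(1) nab y2a y2b y2na y2nb] .
    have ny12: "\<not> collinear L y1 y2"
    proof
      assume c12: "collinear L y1 y2"
      have "y2 \<notin> l1"
      proof
        assume "y2 \<in> l1"
        then have "l1 = l2" using uniq_line[OF l1(1) l2(1) y2na[symmetric] l1(2) _ l2(2) y2(1)] by blast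
        then show False using ls by blast
      qed
      then have "\<exists>!u. u \<in> l1 \<and> collinear L y2 u" using gqax y2P l1 by blast
      moreover have "a \<in> l1 \<and> collinear L y2 a" using l1 y2a by blast
      moreover have "y1 \<in> l1 \<and> collinear L y2 y1" using y1 c12 coll_sym by blast
      ultimately show False using y1na by blast
    qed
    show False
    proof (cases "collinear L d y1 \<and> collinear L d y2")
      case True
      have cy1: "c \<noteq> y1" using y1a nac coll_sym by blast
      have dy1: "d \<noteq> y1" using y1a nda by blast
      have "finite {a, b, c, d} \<and> card {a, b, c, d} \<le> 3"
        using perp_bound[OF y1P y2P ny12, of "{a, b, c, d}"] True y1a y2a y1b y2b y1c y2c
          coll_sym y1na y1nb cy1 dy1 by blast
      moreover have "card {a, b, c, d} = 4" using d3 d(2) by auto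
      ultimately show False by simp
    next
      case False
      then obtain y where y: "y \<in> P" "collinear L y a" "collinear L y b" "collinear L y c"
        "y \<noteq> a" "y \<noteq> b" "\<not> collinear L d y"
        using y1P y1a y1b y1c y1na y1nb y2P y2a y2b y2c y2na y2nb by blast
      show False using caseB[OF P y(1) dP rab d3(1) nab nac y(2-6) nda ndb ndc y(7)] .
    qed
  qed
  show ?thesis using arc noext unfolding is_complete_arc_def by simp
qed

end

theorem corollary3p6:
  fixes P :: "'p set" and L :: "'p set set" and R :: "('g, 'b) monoid_scheme"
    and r :: "'p \<Rightarrow> 'g" and a b c :: 'p
  assumes "gen_quadrangle_2t 2 P L"
    and "faithful_representation P L R r"
    and "finite (carrier R)" and "card (carrier R) = 2 ^ 4"
    and "a \<in> P" and "b \<in> P" and "c \<in> P"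
    and "a \<noteq> b" and "b \<noteq> c" and "a \<noteq> c"
    and "r a \<otimes>\<^bsub>R\<^esub> r b \<otimes>\<^bsub>R\<^esub> r c = \<one>\<^bsub>R\<^esub>"
  shows "{a, b, c} \<in> L \<or> is_complete_arc P L 3 {a, b, c}"
proof -
  have grp: "group R" using assms(2) unfolding faithful_representation_def representation_def by blast
  interpret g: gqrep R P L r
    by (intro gqrep.intro grp gqrep_axioms.intro assms(1,2))
  show ?thesis using g.main assms(5-11) by blast
qed

end
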